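(* Let $\mathcal C$ and $\mathcal D$ be $\Bbbk$-linear categories, let $F:\mathcal C\to\mathcal D$ be a fully faithful ($\Bbbk$-linear) functor, and let $\sigma_{\mathcal C}$ and $\sigma_{\mathcal D}$ be ($\Bbbk$-linear) endofunctors of $\mathcal C$ and $\mathcal D$ respectively. Suppose that $F\circ\sigma_{\mathcal C}$ is naturally isomorphic to $\sigma_{\mathcal D}\circ F$. Then $\mathrm{FP}(u,t,\sigma_{\mathcal C})\le \mathrm{FP}(u,t,\sigma_{\mathcal D})$ coefficientwise, i.e. $\mathrm{fpdim}^n(\sigma_{\mathcal C}^m)\le \mathrm{fpdim}^n(\sigma_{\mathcal D}^m)$ for all $n\ge 1$ and $m\ge 0$.
   Context: $\Bbbk$ is an algebraically closed field. For objects $X,Y$ write $\dim(X,Y)=\dim_\Bbbk\mathrm{Hom}(X,Y)\in\mathbb{Z}_{\ge0}\cup\{\infty\}$. Spectral radius: for a square matrix $A$ with entries in $\mathbb R\cup\{\pm\infty\}$, let $A'$ be obtained by replacing each entry $\infty$ (resp. $-\infty$) in position $(i,j)$ by a real variable $x_{ij}$ (resp. $-x_{ij}$), and set $\rho(A)=\liminf_{\text{all }x_{ij}\to\infty}\rho(A')$, where for a real matrix $\rho$ is the maximum of the absolute values of its eigenvalues. A brick is an object $M$ with $\mathrm{Hom}(M,M)=\Bbbk$. A brick set of size $n$ is a set $\phi=\{X_1,\dots,X_n\}$ of nonzero bricks with $\dim(X_i,X_j)=\delta_{ij}$ for all $i,j$; $\Phi_{n,b}$ denotes the set of brick sets of size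 $n$. For an endofunctor $\sigma$, the adjacency matrix is $A(\phi,\sigma)=(\dim(X_i,\sigma(X_j)))_{n\times n}$, and $\mathrm{fpdim}^n(\sigma)=\sup_{\phi\in\Phi_{n,b}}\rho(A(\phi,\sigma))$ (defined as $0$ if $\Phi_{n,b}=\emptyset$). The Frobenius–Perron series is $\mathrm{FP}(u,t,\sigma)=\sum_{m\ge0}\sum_{n\ge1}\mathrm{fpdim}^n(\sigma^m)t^mu^n$, and for two such series $f\le g$ means every coefficient of $f$ is at most the corresponding coefficient of $g$ (coefficients in $\mathbb R_{\ge0}\cup\{\infty\}$). *)

theory Defs
  imports Complex_Main "HOL-Library.Extended_Nat" "HOL-Library.Extended_Real"
    "HOL-Library.Liminf_Limsup" "HOL-Computational_Algebra.Polynomial"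
begin

definition alg_closed :: "'k::field itself \<Rightarrow> bool" where
  "alg_closed _ \<longleftrightarrow> (\<forall>p :: 'k poly. degree p > 0 \<longrightarrow> (\<exists>x. poly p x = 0))"

definition kdim :: "('k::field \<Rightarrow> 'm::ab_group_add \<Rightarrow> 'm) \<Rightarrow> 'm set \<Rightarrow> enat" where
  "kdim sc S = (if \<exists>B. finite B \<and> module.span sc B = S
                then enat (vector_space.dim sc S) else \<infinity>)"

text \<open>Objects: all elements of type 'o. Hom X Y is a k-subspace of the ambient
  k-vector space 'm; composition cmp X Y Z g f : Hom X Y -> Hom Y Z -> Hom X Z
  (g after f); idm X is the identity of X.\<close>

definition klin_cat ::
  "('k::field \<Rightarrow> 'm::ab_group_add \<Rightarrow> 'm) \<Rightarrow> ('o \<Rightarrow> 'o \<Rightarrow> 'm set)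
   \<Rightarrow> ('o \<Rightarrow> 'o \<Rightarrow> 'o \<Rightarrow> 'm \<Rightarrow> 'm \<Rightarrow> 'm) \<Rightarrow> ('o \<Rightarrow> 'm) \<Rightarrow> bool" where
  "klin_cat sc Hom cmp idm \<longleftrightarrow>
     vector_space sc \<and>
     (\<forall>X Y. module.subspace sc (Hom X Y)) \<and>
     (\<forall>X Y Z f g. f \<in> Hom X Y \<longrightarrow> g \<in> Hom Y Z \<longrightarrow> cmp X Y Z g f \<in> Hom X Z) \<and>
     (\<forall>X. idm X \<in> Hom X X) \<and>
     (\<forall>X Y f. f \<in> Hom X Y \<longrightarrow> cmp X Y Y (idm Y) f = f \<and> cmp X X Y f (idm X) = f) \<and>
     (\<forall>W X Y Z f g h. f \<in> Hom W X \<longrightarrow> g \<in> Hom X Y \<longrightarrow> h \<in> Hom Y Z \<longrightarrow>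
        cmp W Y Z h (cmp W X Y g f) = cmp W X Z (cmp X Y Z h g) f) \<and>
     (\<forall>X Y Z f1 f2 g c. f1 \<in> Hom X Y \<longrightarrow> f2 \<in> Hom X Y \<longrightarrow> g \<in> Hom Y Z \<longrightarrow>
        cmp X Y Z g (f1 + f2) = cmp X Y Z g f1 + cmp X Y Z g f2 \<and>
        cmp X Y Z g (sc c f1) = sc c (cmp X Y Z g f1)) \<and>
     (\<forall>X Y Z f g1 g2 c. f \<in> Hom X Y \<longrightarrow> g1 \<in> Hom Y Z \<longrightarrow> g2 \<in> Hom Y Z \<longrightarrow>
        cmp X Y Z (g1 + g2) f = cmp X Y Z g1 f + cmp X Y Z g2 f \<and>
        cmp X Y Z (sc c g1) f = sc c (cmp X Y Z g1 f))"

definition klin_functor ::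
  "('k::field \<Rightarrow> 'm1::ab_group_add \<Rightarrow> 'm1) \<Rightarrow> ('o1 \<Rightarrow> 'o1 \<Rightarrow> 'm1 set)
   \<Rightarrow> ('o1 \<Rightarrow> 'o1 \<Rightarrow> 'o1 \<Rightarrow> 'm1 \<Rightarrow> 'm1 \<Rightarrow> 'm1) \<Rightarrow> ('o1 \<Rightarrow> 'm1)
   \<Rightarrow> ('k \<Rightarrow> 'm2::ab_group_add \<Rightarrow> 'm2) \<Rightarrow> ('o2 \<Rightarrow> 'o2 \<Rightarrow> 'm2 set)
   \<Rightarrow> ('o2 \<Rightarrow> 'o2 \<Rightarrow> 'o2 \<Rightarrow> 'm2 \<Rightarrow> 'm2 \<Rightarrow> 'm2) \<Rightarrow> ('o2 \<Rightarrow> 'm2)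
   \<Rightarrow> ('o1 \<Rightarrow> 'o2) \<Rightarrow> ('o1 \<Rightarrow> 'o1 \<Rightarrow> 'm1 \<Rightarrow> 'm2) \<Rightarrow> bool" where
  "klin_functor sc1 Hom1 cmp1 id1 sc2 Hom2 cmp2 id2 Fo Fm \<longleftrightarrow>
     (\<forall>X Y f. f \<in> Hom1 X Y \<longrightarrow> Fm X Y f \<in> Hom2 (Fo X) (Fo Y)) \<and>
     (\<forall>X. Fm X X (id1 X) = id2 (Fo X)) \<and>
     (\<forall>X Y Z f g. f \<in> Hom1 X Y \<longrightarrow> g \<in> Hom1 Y Z \<longrightarrow>
        Fm X Z (cmp1 X Y Z g f) = cmp2 (Fo X) (Fo Y) (Fo Z) (Fm Y Z g) (Fm X Y f)) \<and>
     (\<forall>X Y f g c. f \<in> Hom1 X Y \<longrightarrow> g \<in> Hom1 X Y \<longrightarrow>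
        Fm X Y (f + g) = Fm X Y f + Fm X Y g \<and> Fm X Y (sc1 c f) = sc2 c (Fm X Y f))"

definition fully_faithful ::
  "('o1 \<Rightarrow> 'o1 \<Rightarrow> 'm1 set) \<Rightarrow> ('o2 \<Rightarrow> 'o2 \<Rightarrow> 'm2 set)
   \<Rightarrow> ('o1 \<Rightarrow> 'o2) \<Rightarrow> ('o1 \<Rightarrow> 'o1 \<Rightarrow> 'm1 \<Rightarrow> 'm2) \<Rightarrow> bool" where
  "fully_faithful Hom1 Hom2 Fo Fm \<longleftrightarrow>
     (\<forall>X Y. bij_betw (Fm X Y) (Hom1 X Y) (Hom2 (Fo X) (Fo Y)))"

definition nat_iso ::
  "('o1 \<Rightarrow> 'o1 \<Rightarrow> 'm1 set)
   \<Rightarrow> ('o2 \<Rightarrow> 'o2 \<Rightarrow> 'm2 set) \<Rightarrow> ('o2 \<Rightarrow> 'o2 \<Rightarrow> 'o2 \<Rightarrow> 'm2 \<Rightarrow> 'm2 \<Rightarrow> 'm2) \<Rightarrow> ('o2 \<Rightarrow> 'm2)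
   \<Rightarrow> ('o1 \<Rightarrow> 'o2) \<Rightarrow> ('o1 \<Rightarrow> 'o1 \<Rightarrow> 'm1 \<Rightarrow> 'm2)
   \<Rightarrow> ('o1 \<Rightarrow> 'o2) \<Rightarrow> ('o1 \<Rightarrow> 'o1 \<Rightarrow> 'm1 \<Rightarrow> 'm2) \<Rightarrow> bool" where
  "nat_iso Hom1 Hom2 cmp2 id2 Go Gm Ho Hm \<longleftrightarrow>
     (\<exists>\<eta>. (\<forall>X. \<eta> X \<in> Hom2 (Go X) (Ho X) \<and>
              (\<exists>\<theta> \<in> Hom2 (Ho X) (Go X).
                 cmp2 (Go X) (Ho X) (Go X) \<theta> (\<eta> X) = id2 (Go X) \<and>
                 cmp2 (Ho X) (Go X) (Ho X) (\<eta> X) \<theta> = id2 (Ho X))) \<and>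
          (\<forall>X Y f. f \<in> Hom1 X Y \<longrightarrow>
              cmp2 (Go X) (Go Y) (Ho Y) (\<eta> Y) (Gm X Y f) =
              cmp2 (Go X) (Ho X) (Ho Y) (Hm X Y f) (\<eta> X)))"

definition spec_rad :: "'i set \<Rightarrow> ('i \<Rightarrow> 'i \<Rightarrow> real) \<Rightarrow> real" where
  "spec_rad I M = Max {cmod c | c. \<exists>v :: 'i \<Rightarrow> complex. (\<exists>i\<in>I. v i \<noteq> 0) \<and>
      (\<forall>i\<in>I. (\<Sum>j\<in>I. complex_of_real (M i j) * v j) = c * v i)}"

text \<open>Spectral radius of a matrix with entries in N \<union> {\<infinity>}: replace every \<infinity> entry
  in position (i,j) by a real variable x i j and take the liminf as all these
  variables tend to \<infinity>.\<close>

definition spec_rad_inf :: "'i set \<Rightarrow> ('i \<Rightarrow> 'i \<Rightarrow> enat) \<Rightarrow> ereal" where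
  "spec_rad_inf I A =
     Liminf (INF p \<in> {p \<in> I \<times> I. A (fst p) (snd p) = \<infinity>}.
               filtercomap (\<lambda>x :: 'i \<Rightarrow> 'i \<Rightarrow> real. x (fst p) (snd p)) at_top)
       (\<lambda>x. ereal (spec_rad I (\<lambda>i j. if A i j = \<infinity> then x i j else real (the_enat (A i j)))))"

definition hdim :: "('k::field \<Rightarrow> 'm::ab_group_add \<Rightarrow> 'm) \<Rightarrow> ('o \<Rightarrow> 'o \<Rightarrow> 'm set) \<Rightarrow> 'o \<Rightarrow> 'o \<Rightarrow> enat" where
  "hdim sc Hom X Y = kdim sc (Hom X Y)"

definition nonzero_brick :: "('k::field \<Rightarrow> 'm::ab_group_add \<Rightarrow> 'm) \<Rightarrow> ('o \<Rightarrow> 'o \<Rightarrow> 'm set) \<Rightarrow> ('o \<Rightarrow> 'm) \<Rightarrow> 'o \<Rightarrow> bool" where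
  "nonzero_brick sc Hom idm X \<longleftrightarrow> idm X \<noteq> 0 \<and> Hom X X = range (\<lambda>c. sc c (idm X))"

definition brick_set :: "('k::field \<Rightarrow> 'm::ab_group_add \<Rightarrow> 'm) \<Rightarrow> ('o \<Rightarrow> 'o \<Rightarrow> 'm set) \<Rightarrow> ('o \<Rightarrow> 'm) \<Rightarrow> nat \<Rightarrow> 'o set \<Rightarrow> bool" where
  "brick_set sc Hom idm n \<phi> \<longleftrightarrow> finite \<phi> \<and> card \<phi> = n \<and>
     (\<forall>X\<in>\<phi>. nonzero_brick sc Hom idm X) \<and>
     (\<forall>X\<in>\<phi>. \<forall>Y\<in>\<phi>. hdim sc Hom X Y = (if X = Y then 1 else 0))"

definition adj_matrix :: "('k::field \<Rightarrow> 'm::ab_group_add \<Rightarrow> 'm) \<Rightarrow> ('o \<Rightarrow> 'o \<Rightarrow> 'm set) \<Rightarrow> ('o \<Rightarrow> 'o) \<Rightarrow> 'o \<Rightarrow> 'o \<Rightarrow> enat" where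
  "adj_matrix sc Hom So X Y = hdim sc Hom X (So Y)"

definition fpdim :: "('k::field \<Rightarrow> 'm::ab_group_add \<Rightarrow> 'm) \<Rightarrow> ('o \<Rightarrow> 'o \<Rightarrow> 'm set) \<Rightarrow> ('o \<Rightarrow> 'm) \<Rightarrow> nat \<Rightarrow> ('o \<Rightarrow> 'o) \<Rightarrow> ereal" where
  "fpdim sc Hom idm n So =
     (if {\<phi>. brick_set sc Hom idm n \<phi>} = {} then 0
      else (SUP \<phi> \<in> {\<phi>. brick_set sc Hom idm n \<phi>}. spec_rad_inf \<phi> (adj_matrix sc Hom So)))"

end

theory Submission
  imports Defs "Jordan_Normal_Form.Spectral_Radius"
begin


lemma spec_rad_nonneg:
  fixes M :: "'i \<Rightarrow> 'i \<Rightarrow> real"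
  assumes fin: "finite I" and ne: "I \<noteq> {}"
  shows "0 \<le> spec_rad I M"
proof -
  define P where "P = (\<lambda>c. \<exists>v :: 'i \<Rightarrow> complex. (\<exists>i\<in>I. v i \<noteq> 0) \<and>
      (\<forall>i\<in>I. (\<Sum>j\<in>I. complex_of_real (M i j) * v j) = c * v i))"
  have E: "{cmod c | c. P c} = cmod ` Collect P" by auto
  define n where "n = card I"
  obtain e where e: "bij_betw e {0..<n} I" using ex_bij_betw_nat_finite[OF fin] n_def by blast
  have npos: "n > 0" using fin ne n_def by (simp add: card_gt_0_iff)
  define A where "A = mat n n (\<lambda>(a,b). complex_of_real (M (e a) (e b)))"
  have A: "A \<in> carrier_mat n n" unfolding A_def by simp
  have eI: "\<And>a. a < n \<Longrightarrow> e a \<in> I" using e by (auto simp: bij_betw_def)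
  have ie: "\<And>i. i \<in> I \<Longrightarrow> inv_into {0..<n} e i < n \<and> e (inv_into {0..<n} e i) = i"
    using e by (metis atLeastLessThan_iff bij_betw_def bij_betw_inv_into_right inv_into_into)
  have rowsum: "(A *\<^sub>v w) $ a = (\<Sum>j\<in>I. complex_of_real (M (e a) j) * w $ (inv_into {0..<n} e j))"
    if "a < n" "w \<in> carrier_vec n" for a w
  proof -
    have "(A *\<^sub>v w) $ a = (\<Sum>b\<in>{0..<n}. complex_of_real (M (e a) (e b)) * w $ b)"
      using that A by (simp add: A_def scalar_prod_def)
    also have "\<dots> = (\<Sum>b\<in>{0..<n}. complex_of_real (M (e a) (e b)) * w $ (inv_into {0..<n} e (e b)))"
      using e by (intro sum.cong) (auto simp: bij_betw_def inv_into_f_f)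
    also have "\<dots> = (\<Sum>j\<in>I. complex_of_real (M (e a) j) * w $ (inv_into {0..<n} e j))"
      by (rule sum.reindex_bij_betw[OF e])
    finally show ?thesis .
  qed
  have sub: "Collect P \<subseteq> spectrum A"
  proof
    fix c assume "c \<in> Collect P"
    then obtain v where v1: "\<exists>i\<in>I. v i \<noteq> 0"
      and v2: "\<forall>i\<in>I. (\<Sum>j\<in>I. complex_of_real (M i j) * v j) = c * v i" by (auto simp: P_def)
    define w where "w = vec n (\<lambda>a. v (e a))"
    have w: "w \<in> carrier_vec n" unfolding w_def by simp
    have wj: "\<And>j. j \<in> I \<Longrightarrow> w $ (inv_into {0..<n} e j) = v j" using ie unfolding w_def by simp
    from v1 obtain i where i: "i \<in> I" "v i \<noteq> 0" by auto
    have "w \<noteq> 0\<^sub>v n"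
    proof
      assume "w = 0\<^sub>v n"
      hence "w $ (inv_into {0..<n} e i) = 0" using ie[OF i(1)] by simp
      with wj[OF i(1)] i show False by simp
    qed
    moreover have "A *\<^sub>v w = c \<cdot>\<^sub>v w"
    proof (rule eq_vecI)
      show "dim_vec (A *\<^sub>v w) = dim_vec (c \<cdot>\<^sub>v w)" using A w by simp
      fix a assume "a < dim_vec (c \<cdot>\<^sub>v w)"
      hence a: "a < n" using w by simp
      have "(A *\<^sub>v w) $ a = (\<Sum>j\<in>I. complex_of_real (M (e a) j) * v j)"
        unfolding rowsum[OF a w] using wj by (intro sum.cong) auto
      also have "\<dots> = c * v (e a)" using v2 eI[OF a] by auto
      finally show "(A *\<^sub>v w) $ a = (c \<cdot>\<^sub>v w) $ a" using a w by (simp add: w_def)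
    qed
    ultimately show "c \<in> spectrum A" using A w
      unfolding spectrum_def eigenvalue_def eigenvector_def by auto
  qed
  have sup: "spectrum A \<subseteq> Collect P"
  proof
    fix c assume "c \<in> spectrum A"
    then obtain w where w: "w \<in> carrier_vec n" and wn: "w \<noteq> 0\<^sub>v n" and Aw: "A *\<^sub>v w = c \<cdot>\<^sub>v w"
      using A unfolding spectrum_def eigenvalue_def eigenvector_def by auto
    define v where "v = (\<lambda>j. w $ (inv_into {0..<n} e j))"
    have "\<exists>i\<in>I. v i \<noteq> 0"
    proof (rule ccontr)
      assume "\<not> ?thesis"
      hence "\<forall>a<n. w $ a = 0" using eI e unfolding v_def
        by (metis atLeastLessThan_iff bij_betw_def inv_into_f_f zero_order(1))
      hence "w = 0\<^sub>v n" using w by (intro eq_vecI) auto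
      with wn show False by simp
    qed
    moreover have "\<forall>i\<in>I. (\<Sum>j\<in>I. complex_of_real (M i j) * v j) = c * v i"
    proof
      fix i assume i: "i \<in> I"
      let ?a = "inv_into {0..<n} e i"
      have "(\<Sum>j\<in>I. complex_of_real (M i j) * v j) = (A *\<^sub>v w) $ ?a"
        using rowsum[of ?a w] ie[OF i] w unfolding v_def by simp
      also have "\<dots> = c * v i" using Aw ie[OF i] w unfolding v_def by simp
      finally show "(\<Sum>j\<in>I. complex_of_real (M i j) * v j) = c * v i" .
    qed
    ultimately show "c \<in> Collect P" unfolding P_def by blast
  qed
  have fin: "finite (Collect P)" using card_finite_spectrum(1)[OF A] sub finite_subset by blast
  obtain c where "c \<in> spectrum A" using spectrum_non_empty[OF A npos] by auto
  with sup have c: "c \<in> Collect P" by auto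
  have "0 \<le> cmod c" by simp
  also have "\<dots> \<le> Max (cmod ` Collect P)" using fin c by (intro Max_ge) auto
  finally have "0 \<le> Max {cmod c | c. P c}" unfolding E .
  thus ?thesis unfolding spec_rad_def P_def .
qed



lemma spec_rad_inf_nonneg:
  assumes "finite I" "I \<noteq> {}"
  shows "0 \<le> spec_rad_inf I A"
  unfolding spec_rad_inf_def
  by (rule Liminf_bounded) (use spec_rad_nonneg[OF assms] in auto)

lemma spec_rad_reindex:
  fixes M :: "'i \<Rightarrow> 'i \<Rightarrow> real" and N :: "'j \<Rightarrow> 'j \<Rightarrow> real"
  assumes inj: "inj_on h I" and NM: "\<And>i j. i \<in> I \<Longrightarrow> j \<in> I \<Longrightarrow> N (h i) (h j) = M i j"
  shows "spec_rad (h ` I) N = spec_rad I M"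
proof -
  let ?g = "the_inv_into I h"
  have gh: "\<And>i. i \<in> I \<Longrightarrow> ?g (h i) = i" using inj by (simp add: the_inv_into_f_f)
  have "{c. \<exists>v :: 'j \<Rightarrow> complex. (\<exists>i\<in>h ` I. v i \<noteq> 0) \<and>
      (\<forall>i\<in>h ` I. (\<Sum>j\<in>h ` I. complex_of_real (N i j) * v j) = c * v i)} =
     {c. \<exists>v :: 'i \<Rightarrow> complex. (\<exists>i\<in>I. v i \<noteq> 0) \<and>
      (\<forall>i\<in>I. (\<Sum>j\<in>I. complex_of_real (M i j) * v j) = c * v i)}"
    (is "{c. ?L c} = {c. ?R c}")
  proof (intro Collect_cong iffI)
    fix c assume "?L c"
    then obtain v where v1: "\<exists>i\<in>h ` I. v i \<noteq> 0" and
      v2: "\<forall>i\<in>h ` I. (\<Sum>j\<in>h ` I. complex_of_real (N i j) * v j) = c * v i" by blast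
    show "?R c"
    proof (intro exI[of _ "v \<circ> h"] conjI ballI)
      show "\<exists>i\<in>I. (v \<circ> h) i \<noteq> 0" using v1 by auto
      fix i assume i: "i \<in> I"
      have "(\<Sum>j\<in>I. complex_of_real (M i j) * (v \<circ> h) j) = (\<Sum>j\<in>I. complex_of_real (N (h i) (h j)) * v (h j))"
        using NM i by (intro sum.cong) auto
      also have "\<dots> = (\<Sum>j\<in>h ` I. complex_of_real (N (h i) j) * v j)"
        using sum.reindex[OF inj, of "\<lambda>j. complex_of_real (N (h i) j) * v j"] by simp
      also have "\<dots> = c * (v \<circ> h) i" using v2 i by auto
      finally show "(\<Sum>j\<in>I. complex_of_real (M i j) * (v \<circ> h) j) = c * (v \<circ> h) i" .
    qed
  next
    fix c assume "?R c"
    then obtain v where v1: "\<exists>i\<in>I. v i \<noteq> 0" and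
      v2: "\<forall>i\<in>I. (\<Sum>j\<in>I. complex_of_real (M i j) * v j) = c * v i" by blast
    show "?L c"
    proof (intro exI[of _ "v \<circ> ?g"] conjI ballI)
      show "\<exists>i\<in>h ` I. (v \<circ> ?g) i \<noteq> 0" using v1 gh by force
      fix b assume "b \<in> h ` I"
      then obtain i where i: "i \<in> I" "b = h i" by auto
      have "(\<Sum>j\<in>h ` I. complex_of_real (N b j) * (v \<circ> ?g) j) =
            (\<Sum>j\<in>I. complex_of_real (N (h i) (h j)) * (v \<circ> ?g) (h j))"
        using sum.reindex[OF inj, of "\<lambda>j. complex_of_real (N (h i) j) * (v \<circ> ?g) j"] i by simp
      also have "\<dots> = (\<Sum>j\<in>I. complex_of_real (M i j) * v j)"
        using NM i gh by (intro sum.cong) auto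
      also have "\<dots> = c * (v \<circ> ?g) b" using v2 i gh by auto
      finally show "(\<Sum>j\<in>h ` I. complex_of_real (N b j) * (v \<circ> ?g) j) = c * (v \<circ> ?g) b" .
    qed
  qed
  hence "{cmod c | c. ?L c} = {cmod c | c. ?R c}" by blast
  thus ?thesis unfolding spec_rad_def by simp
qed

lemma Liminf_filter_antimono:
  assumes "F' \<le> F" shows "Liminf F f \<le> Liminf F' f"
  unfolding Liminf_def using assms by (auto intro!: SUP_mono dest: filter_leD)

lemma spec_rad_inf_reindex:
  fixes A :: "'i \<Rightarrow> 'i \<Rightarrow> enat" and B :: "'j \<Rightarrow> 'j \<Rightarrow> enat"
  assumes inj: "inj_on h I" and BA: "\<And>i j. i \<in> I \<Longrightarrow> j \<in> I \<Longrightarrow> B (h i) (h j) = A i j"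
  shows "spec_rad_inf I A \<le> spec_rad_inf (h ` I) B"
proof -
  define T where "T = (\<lambda>(x :: 'j \<Rightarrow> 'j \<Rightarrow> real) i j. x (h i) (h j))"
  define f where "f = (\<lambda>x. ereal (spec_rad I (\<lambda>i j. if A i j = \<infinity> then x i j else real (the_enat (A i j)))))"
  define g where "g = (\<lambda>x. ereal (spec_rad (h ` I) (\<lambda>i j. if B i j = \<infinity> then x i j else real (the_enat (B i j)))))"
  define F where "F = (INF p \<in> {p \<in> I \<times> I. A (fst p) (snd p) = \<infinity>}.
               filtercomap (\<lambda>x :: 'i \<Rightarrow> 'i \<Rightarrow> real. x (fst p) (snd p)) at_top)"
  define G where "G = (INF p \<in> {p \<in> h ` I \<times> h ` I. B (fst p) (snd p) = \<infinity>}.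
               filtercomap (\<lambda>x :: 'j \<Rightarrow> 'j \<Rightarrow> real. x (fst p) (snd p)) at_top)"
  have gf: "g x = f (T x)" for x
    unfolding g_def f_def T_def
    by (subst spec_rad_reindex[OF inj]) (auto simp: BA)
  have le: "filtermap T G \<le> F"
    unfolding F_def
  proof (rule INF_greatest)
    fix p assume p: "p \<in> {p \<in> I \<times> I. A (fst p) (snd p) = \<infinity>}"
    let ?q = "(h (fst p), h (snd p))"
    have q: "?q \<in> {p \<in> h ` I \<times> h ` I. B (fst p) (snd p) = \<infinity>}" using p BA by auto
    have "G \<le> filtercomap (\<lambda>x :: 'j \<Rightarrow> 'j \<Rightarrow> real. x (fst ?q) (snd ?q)) at_top"
      unfolding G_def by (rule INF_lower[OF q])
    hence "filtermap (\<lambda>x :: 'j \<Rightarrow> 'j \<Rightarrow> real. x (fst ?q) (snd ?q)) G \<le> at_top"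
      by (simp add: filtermap_le_iff_le_filtercomap)
    hence "filtermap (\<lambda>x. x (fst p) (snd p)) (filtermap T G) \<le> at_top"
      by (simp add: filtermap_filtermap T_def o_def)
    thus "filtermap T G \<le> filtercomap (\<lambda>x. x (fst p) (snd p)) at_top"
      by (simp add: filtermap_le_iff_le_filtercomap)
  qed
  have "spec_rad_inf I A = Liminf F f" unfolding spec_rad_inf_def F_def f_def ..
  also have "\<dots> \<le> Liminf (filtermap T G) f" by (rule Liminf_filter_antimono[OF le])
  also have "\<dots> \<le> Liminf G (\<lambda>x. f (T x))" by (rule Liminf_filtermap_le)
  also have "\<dots> = Liminf G g" using gf by (metis)
  also have "\<dots> = spec_rad_inf (h ` I) B" unfolding spec_rad_inf_def G_def g_def ..
  finally show ?thesis .
qed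



lemma kdim_transfer:
  fixes s1 :: "'k::field \<Rightarrow> 'm1::ab_group_add \<Rightarrow> 'm1"
    and s2 :: "'k \<Rightarrow> 'm2::ab_group_add \<Rightarrow> 'm2"
  assumes vs1: "vector_space s1" and vs2: "vector_space s2"
    and S1: "module.subspace s1 S1"
    and add: "\<And>x y. x \<in> S1 \<Longrightarrow> y \<in> S1 \<Longrightarrow> f (x + y) = f x + f y"
    and scl: "\<And>c x. x \<in> S1 \<Longrightarrow> f (s1 c x) = s2 c (f x)"
    and bij: "bij_betw f S1 S2"
  shows "kdim s1 S1 = kdim s2 S2"
proof -
  interpret v1: vector_space s1 by fact
  interpret v2: vector_space s2 by fact
  have inj: "inj_on f S1" and img: "f ` S1 = S2" using bij by (auto simp: bij_betw_def)
  have f0: "f 0 = 0"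
  proof -
    have "f (0 + 0) = f 0 + f 0" using add v1.subspace_0[OF S1] by blast
    thus ?thesis by simp
  qed
  have sumS1: "(\<Sum>v\<in>T. s1 (u v) v) \<in> S1" if "T \<subseteq> S1" for T u
    using that by (auto intro!: v1.subspace_sum[OF S1] v1.subspace_scale[OF S1])
  have fsum: "f (\<Sum>v\<in>T. s1 (u v) v) = (\<Sum>v\<in>T. s2 (u v) (f v))" if "finite T" "T \<subseteq> S1" for T u
    using that
  proof (induction T rule: finite_induct)
    case empty then show ?case using f0 by simp
  next
    case (insert x T)
    have "(\<Sum>v\<in>T. s1 (u v) v) \<in> S1"
      using insert sumS1 by simp
    moreover have "s1 (u x) x \<in> S1" using insert v1.subspace_scale[OF S1] by auto
    ultimately show ?case using insert add scl by simp
  qed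
  have span_img: "v2.span (f ` B) = f ` v1.span B" if B: "B \<subseteq> S1" for B
  proof
    show "v2.span (f ` B) \<subseteq> f ` v1.span B"
    proof
      fix y assume "y \<in> v2.span (f ` B)"
      then obtain t r where y: "y = (\<Sum>a\<in>t. s2 (r a) a)" and t: "finite t" "t \<subseteq> f ` B"
        unfolding v2.span_explicit by blast
      obtain t0 where t0: "t0 \<subseteq> B" "finite t0" "t = f ` t0"
        using finite_subset_image[OF t] by blast
      have it0: "inj_on f t0" using inj t0 B by (meson inj_on_subset order_trans)
      have "y = (\<Sum>a\<in>t0. s2 (r (f a)) (f a))" using y t0 sum.reindex[OF it0] by simp
      also have "\<dots> = f (\<Sum>a\<in>t0. s1 (r (f a)) a)" using fsum t0 B by auto
      moreover have "(\<Sum>a\<in>t0. s1 (r (f a)) a) \<in> v1.span B" unfolding v1.span_explicit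
        using t0 by (auto intro!: exI[of _ t0] exI[of _ "\<lambda>a. r (f a)"])
      ultimately show "y \<in> f ` v1.span B" by auto
    qed
  next
    show "f ` v1.span B \<subseteq> v2.span (f ` B)"
    proof
      fix y assume "y \<in> f ` v1.span B"
      then obtain t r where y: "y = f (\<Sum>a\<in>t. s1 (r a) a)" and t: "finite t" "t \<subseteq> B"
        unfolding v1.span_explicit by blast
      have it: "inj_on f t" using inj t B by (meson inj_on_subset order_trans)
      let ?g = "the_inv_into t f"
      have "y = (\<Sum>a\<in>t. s2 (r a) (f a))" using y fsum t B by auto
      also have "\<dots> = (\<Sum>a\<in>t. s2 (r (?g (f a))) (f a))"
        using it by (intro sum.cong) (auto simp: the_inv_into_f_f)
      also have "\<dots> = (\<Sum>b\<in>f ` t. s2 (r (?g b)) b)"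
        using sum.reindex[OF it, of "\<lambda>b. s2 (r (?g b)) b"] by (simp only: o_def)
      finally show "y \<in> v2.span (f ` B)" unfolding v2.span_explicit
        using t by (auto intro!: exI[of _ "f ` t"] exI[of _ "\<lambda>b. r (?g b)"])
    qed
  qed
  have indep: "v2.independent (f ` B)" if B: "B \<subseteq> S1" "v1.independent B" for B
    unfolding v2.independent_explicit_module
  proof (intro allI impI)
    fix t u v assume t: "finite t" "t \<subseteq> f ` B" and s: "(\<Sum>v\<in>t. s2 (u v) v) = 0" and v: "v \<in> t"
    obtain t0 where t0: "t0 \<subseteq> B" "finite t0" "t = f ` t0"
      using finite_subset_image[OF t] by blast
    have it0: "inj_on f t0" using inj t0 B by (meson inj_on_subset order_trans)
    have "f (\<Sum>a\<in>t0. s1 (u (f a)) a) = (\<Sum>a\<in>t0. s2 (u (f a)) (f a))" using fsum t0 B by auto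
    also have "\<dots> = 0" using s t0 sum.reindex[OF it0, of "\<lambda>v. s2 (u v) v"] by (simp add: o_def)
    finally have "f (\<Sum>a\<in>t0. s1 (u (f a)) a) = f 0" using f0 by simp
    hence z: "(\<Sum>a\<in>t0. s1 (u (f a)) a) = 0"
      using inj sumS1 t0 B v1.subspace_0[OF S1] by (meson inj_onD order_trans)
    from v t0 obtain a where a: "a \<in> t0" "v = f a" by auto
    have "u (f a) = 0" using v1.independentD[OF B(2) t0(2) t0(1) z a(1)] .
    thus "u v = 0" using a by simp
  qed
  have fg: "(\<exists>B. finite B \<and> v1.span B = S1) \<longleftrightarrow> (\<exists>B. finite B \<and> v2.span B = S2)"
  proof
    assume "\<exists>B. finite B \<and> v1.span B = S1"
    then obtain B where B: "finite B" "v1.span B = S1" by blast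
    have "B \<subseteq> S1" using B v1.span_superset by blast
    hence "v2.span (f ` B) = S2" using span_img B img by simp
    thus "\<exists>B. finite B \<and> v2.span B = S2" using B by blast
  next
    assume "\<exists>B. finite B \<and> v2.span B = S2"
    then obtain B2 where B2: "finite B2" "v2.span B2 = S2" by blast
    have "B2 \<subseteq> f ` S1" using B2 v2.span_superset img by blast
    then obtain B where B: "B \<subseteq> S1" "finite B" "B2 = f ` B"
      using finite_subset_image[OF B2(1)] by blast
    have "f ` v1.span B = f ` S1" using span_img[OF B(1)] B2 B img by simp
    moreover have "v1.span B \<subseteq> S1" using v1.span_minimal[OF B(1) S1] .
    ultimately have "v1.span B = S1" using inj by (simp add: inj_on_image_eq_iff)
    thus "\<exists>B. finite B \<and> v1.span B = S1" using B by blast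
  qed
  have dims: "v1.dim S1 = v2.dim S2"
  proof -
    obtain B where B: "B \<subseteq> S1" "v1.independent B" "S1 \<subseteq> v1.span B" "card B = v1.dim S1"
      by (rule v1.basis_exists)
    have "v1.span B \<subseteq> S1" using v1.span_minimal[OF B(1) S1] .
    hence "v1.span B = S1" using B by blast
    hence sp: "v2.span (f ` B) = S2" using span_img[OF B(1)] img by simp
    have "card (f ` B) = v1.dim S1" using B inj card_image inj_on_subset by metis
    moreover have "f ` B \<subseteq> S2" using B img by blast
    ultimately show ?thesis using v2.dim_unique[of "f ` B" S2] sp indep[OF B(1,2)] by auto
  qed
  show ?thesis unfolding kdim_def using fg dims by simp
qed



definition isoC :: "('o \<Rightarrow> 'o \<Rightarrow> 'm set) \<Rightarrow> ('o \<Rightarrow> 'o \<Rightarrow> 'o \<Rightarrow> 'm \<Rightarrow> 'm \<Rightarrow> 'm) \<Rightarrow> ('o \<Rightarrow> 'm) \<Rightarrow> 'o \<Rightarrow> 'o \<Rightarrow> bool" where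
  "isoC Hom cmp idm A B \<longleftrightarrow> (\<exists>\<eta>\<in>Hom A B. \<exists>\<theta>\<in>Hom B A. cmp A B A \<theta> \<eta> = idm A \<and> cmp B A B \<eta> \<theta> = idm B)"

lemma klin_catD:
  assumes "klin_cat sc Hom cmp idm"
  shows "vector_space sc" "\<And>X Y. module.subspace sc (Hom X Y)"
    "\<And>X Y Z f g. f \<in> Hom X Y \<Longrightarrow> g \<in> Hom Y Z \<Longrightarrow> cmp X Y Z g f \<in> Hom X Z"
    "\<And>X. idm X \<in> Hom X X"
    "\<And>X Y f. f \<in> Hom X Y \<Longrightarrow> cmp X Y Y (idm Y) f = f"
    "\<And>X Y f. f \<in> Hom X Y \<Longrightarrow> cmp X X Y f (idm X) = f"
    "\<And>W X Y Z f g h. f \<in> Hom W X \<Longrightarrow> g \<in> Hom X Y \<Longrightarrow> h \<in> Hom Y Z \<Longrightarrow>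
        cmp W Y Z h (cmp W X Y g f) = cmp W X Z (cmp X Y Z h g) f"
    "\<And>X Y Z f1 f2 g. f1 \<in> Hom X Y \<Longrightarrow> f2 \<in> Hom X Y \<Longrightarrow> g \<in> Hom Y Z \<Longrightarrow>
        cmp X Y Z g (f1 + f2) = cmp X Y Z g f1 + cmp X Y Z g f2"
    "\<And>X Y Z f1 g c. f1 \<in> Hom X Y \<Longrightarrow> g \<in> Hom Y Z \<Longrightarrow>
        cmp X Y Z g (sc c f1) = sc c (cmp X Y Z g f1)"
proof -
  note A = assms[unfolded klin_cat_def]
  show "vector_space sc" using A by (rule conjunct1)
  show "\<And>X Y. module.subspace sc (Hom X Y)" using A[THEN conjunct2, THEN conjunct1] by blast
  show "\<And>X Y Z f g. f \<in> Hom X Y \<Longrightarrow> g \<in> Hom Y Z \<Longrightarrow> cmp X Y Z g f \<in> Hom X Z"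
    using A[THEN conjunct2, THEN conjunct2, THEN conjunct1] by blast
  show "\<And>X. idm X \<in> Hom X X"
    using A[THEN conjunct2, THEN conjunct2, THEN conjunct2, THEN conjunct1] by blast
  show "\<And>X Y f. f \<in> Hom X Y \<Longrightarrow> cmp X Y Y (idm Y) f = f"
    "\<And>X Y f. f \<in> Hom X Y \<Longrightarrow> cmp X X Y f (idm X) = f"
    using A[THEN conjunct2, THEN conjunct2, THEN conjunct2, THEN conjunct2, THEN conjunct1] by blast+
  show "\<And>W X Y Z f g h. f \<in> Hom W X \<Longrightarrow> g \<in> Hom X Y \<Longrightarrow> h \<in> Hom Y Z \<Longrightarrow>
        cmp W Y Z h (cmp W X Y g f) = cmp W X Z (cmp X Y Z h g) f"
    using A[THEN conjunct2, THEN conjunct2, THEN conjunct2, THEN conjunct2, THEN conjunct2, THEN conjunct1] by blast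
  show "\<And>X Y Z f1 f2 g. f1 \<in> Hom X Y \<Longrightarrow> f2 \<in> Hom X Y \<Longrightarrow> g \<in> Hom Y Z \<Longrightarrow>
        cmp X Y Z g (f1 + f2) = cmp X Y Z g f1 + cmp X Y Z g f2"
    "\<And>X Y Z f1 g c. f1 \<in> Hom X Y \<Longrightarrow> g \<in> Hom Y Z \<Longrightarrow>
        cmp X Y Z g (sc c f1) = sc c (cmp X Y Z g f1)"
    using A[THEN conjunct2, THEN conjunct2, THEN conjunct2, THEN conjunct2, THEN conjunct2, THEN conjunct2, THEN conjunct1] by blast+
qed

lemma klin_functorD:
  assumes "klin_functor sc1 Hom1 cmp1 id1 sc2 Hom2 cmp2 id2 Fo Fm"
  shows "\<And>X Y f. f \<in> Hom1 X Y \<Longrightarrow> Fm X Y f \<in> Hom2 (Fo X) (Fo Y)"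
    "\<And>X. Fm X X (id1 X) = id2 (Fo X)"
    "\<And>X Y Z f g. f \<in> Hom1 X Y \<Longrightarrow> g \<in> Hom1 Y Z \<Longrightarrow>
        Fm X Z (cmp1 X Y Z g f) = cmp2 (Fo X) (Fo Y) (Fo Z) (Fm Y Z g) (Fm X Y f)"
    "\<And>X Y f g. f \<in> Hom1 X Y \<Longrightarrow> g \<in> Hom1 X Y \<Longrightarrow> Fm X Y (f + g) = Fm X Y f + Fm X Y g"
    "\<And>X Y f c. f \<in> Hom1 X Y \<Longrightarrow> Fm X Y (sc1 c f) = sc2 c (Fm X Y f)"
proof -
  note A = assms[unfolded klin_functor_def]
  show "\<And>X Y f. f \<in> Hom1 X Y \<Longrightarrow> Fm X Y f \<in> Hom2 (Fo X) (Fo Y)" using A[THEN conjunct1] by blast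
  show "\<And>X. Fm X X (id1 X) = id2 (Fo X)" using A[THEN conjunct2, THEN conjunct1] by blast
  show "\<And>X Y Z f g. f \<in> Hom1 X Y \<Longrightarrow> g \<in> Hom1 Y Z \<Longrightarrow>
        Fm X Z (cmp1 X Y Z g f) = cmp2 (Fo X) (Fo Y) (Fo Z) (Fm Y Z g) (Fm X Y f)"
    using A[THEN conjunct2, THEN conjunct2, THEN conjunct1] by blast
  show "\<And>X Y f g. f \<in> Hom1 X Y \<Longrightarrow> g \<in> Hom1 X Y \<Longrightarrow> Fm X Y (f + g) = Fm X Y f + Fm X Y g"
    "\<And>X Y f c. f \<in> Hom1 X Y \<Longrightarrow> Fm X Y (sc1 c f) = sc2 c (Fm X Y f)"
    using A[THEN conjunct2, THEN conjunct2, THEN conjunct2] by blast+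
qed


lemma iso_refl:
  assumes "klin_cat sc Hom cmp idm" shows "isoC Hom cmp idm A A"
  unfolding isoC_def using klin_catD(4)[OF assms] klin_catD(5)[OF assms, OF klin_catD(4)[OF assms]] by blast

lemma iso_trans:
  assumes C: "klin_cat sc Hom cmp idm" and AB: "isoC Hom cmp idm A B" and BC: "isoC Hom cmp idm B D"
  shows "isoC Hom cmp idm A D"
proof -
  from AB obtain \<eta> \<theta> where e: "\<eta> \<in> Hom A B" "\<theta> \<in> Hom B A" "cmp A B A \<theta> \<eta> = idm A" "cmp B A B \<eta> \<theta> = idm B"
    unfolding isoC_def by blast
  from BC obtain \<eta>' \<theta>' where e': "\<eta>' \<in> Hom B D" "\<theta>' \<in> Hom D B" "cmp B D B \<theta>' \<eta>' = idm B" "cmp D B D \<eta>' \<theta>' = idm D"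
    unfolding isoC_def by blast
  note cl = klin_catD(3)[OF C] and idl = klin_catD(5)[OF C] and idr = klin_catD(6)[OF C]
    and asc = klin_catD(7)[OF C]
  have 1: "cmp A D A (cmp D B A \<theta> \<theta>') (cmp A B D \<eta>' \<eta>) = idm A"
  proof -
    have "cmp A D A (cmp D B A \<theta> \<theta>') (cmp A B D \<eta>' \<eta>) = cmp A B A (cmp B D A (cmp D B A \<theta> \<theta>') \<eta>') \<eta>"
      by (rule asc[OF e(1) e'(1) cl[OF e'(2) e(2)]])
    also have "cmp B D A (cmp D B A \<theta> \<theta>') \<eta>' = cmp B B A \<theta> (cmp B D B \<theta>' \<eta>')"
      by (rule asc[OF e'(1) e'(2) e(2), symmetric])
    also have "\<dots> = \<theta>" using e'(3) idr[OF e(2)] by simp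
    finally show ?thesis using e by simp
  qed
  have 2: "cmp D A D (cmp A B D \<eta>' \<eta>) (cmp D B A \<theta> \<theta>') = idm D"
  proof -
    have "cmp D A D (cmp A B D \<eta>' \<eta>) (cmp D B A \<theta> \<theta>') = cmp D B D (cmp B A D (cmp A B D \<eta>' \<eta>) \<theta>) \<theta>'"
      by (rule asc[OF e'(2) e(2) cl[OF e(1) e'(1)]])
    also have "cmp B A D (cmp A B D \<eta>' \<eta>) \<theta> = cmp B B D \<eta>' (cmp B A B \<eta> \<theta>)"
      by (rule asc[OF e(2) e(1) e'(1), symmetric])
    also have "\<dots> = \<eta>'" using e(4) idr[OF e'(1)] by simp
    finally show ?thesis using e' by simp
  qed
  show ?thesis unfolding isoC_def
    by (intro bexI[of _ "cmp A B D \<eta>' \<eta>"] bexI[of _ "cmp D B A \<theta> \<theta>'"] conjI 1 2 cl e e')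
qed

lemma iso_functor:
  assumes F: "klin_functor sc Hom cmp idm sc Hom cmp idm So Sm" and AB: "isoC Hom cmp idm A B"
  shows "isoC Hom cmp idm (So A) (So B)"
proof -
  from AB obtain \<eta> \<theta> where e: "\<eta> \<in> Hom A B" "\<theta> \<in> Hom B A" "cmp A B A \<theta> \<eta> = idm A" "cmp B A B \<eta> \<theta> = idm B"
    unfolding isoC_def by blast
  have "Sm A B \<eta> \<in> Hom (So A) (So B)" "Sm B A \<theta> \<in> Hom (So B) (So A)"
    using klin_functorD(1)[OF F] e by blast+
  moreover have "cmp (So A) (So B) (So A) (Sm B A \<theta>) (Sm A B \<eta>) = idm (So A)"
    using klin_functorD(3)[OF F e(1) e(2)] e(3) klin_functorD(2)[OF F] by simp
  moreover have "cmp (So B) (So A) (So B) (Sm A B \<eta>) (Sm B A \<theta>) = idm (So B)"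
    using klin_functorD(3)[OF F e(2) e(1)] e(4) klin_functorD(2)[OF F] by simp
  ultimately show ?thesis unfolding isoC_def by blast
qed

lemma iso_hdim:
  assumes C: "klin_cat sc Hom cmp idm" and AB: "isoC Hom cmp idm A B"
  shows "hdim sc Hom X A = hdim sc Hom X B"
proof -
  from AB obtain \<eta> \<theta> where e: "\<eta> \<in> Hom A B" "\<theta> \<in> Hom B A" "cmp A B A \<theta> \<eta> = idm A" "cmp B A B \<eta> \<theta> = idm B"
    unfolding isoC_def by blast
  note cl = klin_catD(3)[OF C] and idl = klin_catD(5)[OF C]
    and asc = klin_catD(7)[OF C] and vs = klin_catD(1)[OF C] and sub = klin_catD(2)[OF C]
    and ladd = klin_catD(8)[OF C] and lsc = klin_catD(9)[OF C]
  have bij: "bij_betw (cmp X A B \<eta>) (Hom X A) (Hom X B)"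
  proof (rule bij_betw_byWitness[where f' = "cmp X B A \<theta>"])
    show "\<forall>a\<in>Hom X A. cmp X B A \<theta> (cmp X A B \<eta> a) = a" using asc[OF _ e(1) e(2)] e(3) idl by simp
    show "\<forall>a\<in>Hom X B. cmp X A B \<eta> (cmp X B A \<theta> a) = a" using asc[OF _ e(2) e(1)] e(4) idl by simp
    show "cmp X A B \<eta> ` Hom X A \<subseteq> Hom X B" using cl[OF _ e(1)] by blast
    show "cmp X B A \<theta> ` Hom X B \<subseteq> Hom X A" using cl[OF _ e(2)] by blast
  qed
  show ?thesis unfolding hdim_def
    by (rule kdim_transfer[OF vs vs sub _ _ bij]) (simp_all add: ladd[OF _ _ e(1)] lsc[OF _ e(1)])
qed

lemma ff_hdim:
  assumes C1: "klin_cat sc1 Hom1 cmp1 id1" and C2: "klin_cat sc2 Hom2 cmp2 id2"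
    and F: "klin_functor sc1 Hom1 cmp1 id1 sc2 Hom2 cmp2 id2 Fo Fm"
    and ff: "fully_faithful Hom1 Hom2 Fo Fm"
  shows "hdim sc1 Hom1 X Y = hdim sc2 Hom2 (Fo X) (Fo Y)"
  unfolding hdim_def
proof (rule kdim_transfer)
  show "vector_space sc1" "module.subspace sc1 (Hom1 X Y)" using klin_catD(1,2)[OF C1] by blast+
  show "vector_space sc2" using klin_catD(1)[OF C2] by blast
  show "bij_betw (Fm X Y) (Hom1 X Y) (Hom2 (Fo X) (Fo Y))" using ff unfolding fully_faithful_def by blast
  show "\<And>x y. x \<in> Hom1 X Y \<Longrightarrow> y \<in> Hom1 X Y \<Longrightarrow> Fm X Y (x + y) = Fm X Y x + Fm X Y y"
    "\<And>c x. x \<in> Hom1 X Y \<Longrightarrow> Fm X Y (sc1 c x) = sc2 c (Fm X Y x)"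
    using klin_functorD(4,5)[OF F] by blast+
qed


lemma ff_brick:
  assumes C1: "klin_cat sc1 Hom1 cmp1 id1" and C2: "klin_cat sc2 Hom2 cmp2 id2"
    and F: "klin_functor sc1 Hom1 cmp1 id1 sc2 Hom2 cmp2 id2 Fo Fm"
    and ff: "fully_faithful Hom1 Hom2 Fo Fm"
    and br: "nonzero_brick sc1 Hom1 id1 X"
  shows "nonzero_brick sc2 Hom2 id2 (Fo X)"
proof -
  have bij: "bij_betw (Fm X X) (Hom1 X X) (Hom2 (Fo X) (Fo X))"
    using ff unfolding fully_faithful_def by blast
  interpret v1: vector_space sc1 using klin_catD(1)[OF C1] .
  have z: "0 \<in> Hom1 X X" using v1.subspace_0[OF klin_catD(2)[OF C1]] .
  have Fz: "Fm X X 0 = 0" using klin_functorD(4)[OF F z z] by simp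
  have idin: "id1 X \<in> Hom1 X X" using klin_catD(4)[OF C1] .
  have idF: "Fm X X (id1 X) = id2 (Fo X)" using klin_functorD(2)[OF F] .
  have "id2 (Fo X) \<noteq> 0"
  proof
    assume "id2 (Fo X) = 0"
    hence "Fm X X (id1 X) = Fm X X 0" using idF Fz by simp
    hence "id1 X = 0" using bij idin z unfolding bij_betw_def by (meson inj_onD)
    with br show False unfolding nonzero_brick_def by simp
  qed
  moreover have "Hom2 (Fo X) (Fo X) = range (\<lambda>c. sc2 c (id2 (Fo X)))"
  proof -
    have "Hom2 (Fo X) (Fo X) = Fm X X ` Hom1 X X" using bij by (simp add: bij_betw_def)
    also have "\<dots> = Fm X X ` range (\<lambda>c. sc1 c (id1 X))" using br unfolding nonzero_brick_def by simp
    also have "\<dots> = range (\<lambda>c. sc2 c (id2 (Fo X)))"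
      unfolding image_image using klin_functorD(5)[OF F idin] idF by simp
    finally show ?thesis .
  qed
  ultimately show ?thesis unfolding nonzero_brick_def by simp
qed

theorem theorem0p1:
  fixes sc1 :: "'k::field \<Rightarrow> 'm1::ab_group_add \<Rightarrow> 'm1"
    and Hom1 :: "'o1 \<Rightarrow> 'o1 \<Rightarrow> 'm1 set"
    and cmp1 :: "'o1 \<Rightarrow> 'o1 \<Rightarrow> 'o1 \<Rightarrow> 'm1 \<Rightarrow> 'm1 \<Rightarrow> 'm1"
    and id1 :: "'o1 \<Rightarrow> 'm1"
    and sc2 :: "'k \<Rightarrow> 'm2::ab_group_add \<Rightarrow> 'm2"
    and Hom2 :: "'o2 \<Rightarrow> 'o2 \<Rightarrow> 'm2 set"
    and cmp2 :: "'o2 \<Rightarrow> 'o2 \<Rightarrow> 'o2 \<Rightarrow> 'm2 \<Rightarrow> 'm2 \<Rightarrow> 'm2"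
    and id2 :: "'o2 \<Rightarrow> 'm2"
    and Fo :: "'o1 \<Rightarrow> 'o2" and Fm :: "'o1 \<Rightarrow> 'o1 \<Rightarrow> 'm1 \<Rightarrow> 'm2"
    and SCo :: "'o1 \<Rightarrow> 'o1" and SCm :: "'o1 \<Rightarrow> 'o1 \<Rightarrow> 'm1 \<Rightarrow> 'm1"
    and SDo :: "'o2 \<Rightarrow> 'o2" and SDm :: "'o2 \<Rightarrow> 'o2 \<Rightarrow> 'm2 \<Rightarrow> 'm2"
  assumes "alg_closed TYPE('k)"
    and "klin_cat sc1 Hom1 cmp1 id1"
    and "klin_cat sc2 Hom2 cmp2 id2"
    and "klin_functor sc1 Hom1 cmp1 id1 sc2 Hom2 cmp2 id2 Fo Fm"
    and "fully_faithful Hom1 Hom2 Fo Fm"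
    and "klin_functor sc1 Hom1 cmp1 id1 sc1 Hom1 cmp1 id1 SCo SCm"
    and "klin_functor sc2 Hom2 cmp2 id2 sc2 Hom2 cmp2 id2 SDo SDm"
    and "nat_iso Hom1 Hom2 cmp2 id2
           (Fo \<circ> SCo) (\<lambda>X Y f. Fm (SCo X) (SCo Y) (SCm X Y f))
           (SDo \<circ> Fo) (\<lambda>X Y f. SDm (Fo X) (Fo Y) (Fm X Y f))"
  shows "\<forall>n\<ge>1. \<forall>m. fpdim sc1 Hom1 id1 n (SCo ^^ m) \<le> fpdim sc2 Hom2 id2 n (SDo ^^ m)"
  proof (intro allI impI)
  fix n m :: nat assume n: "n \<ge> 1"
  note C1 = assms(2) and C2 = assms(3) and F = assms(4) and ff = assms(5)
    and SC = assms(6) and SD = assms(7) and NI = assms(8)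
  obtain \<eta> where \<eta>: "\<And>X. \<eta> X \<in> Hom2 ((Fo \<circ> SCo) X) ((SDo \<circ> Fo) X) \<and>
              (\<exists>\<theta> \<in> Hom2 ((SDo \<circ> Fo) X) ((Fo \<circ> SCo) X).
                 cmp2 ((Fo \<circ> SCo) X) ((SDo \<circ> Fo) X) ((Fo \<circ> SCo) X) \<theta> (\<eta> X) = id2 ((Fo \<circ> SCo) X) \<and>
                 cmp2 ((SDo \<circ> Fo) X) ((Fo \<circ> SCo) X) ((SDo \<circ> Fo) X) (\<eta> X) \<theta> = id2 ((SDo \<circ> Fo) X))"
    using NI unfolding nat_iso_def by blast
  have isoF: "isoC Hom2 cmp2 id2 (Fo (SCo X)) (SDo (Fo X))" for X
    using \<eta>[of X] unfolding isoC_def o_def by blast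
  have isoP: "isoC Hom2 cmp2 id2 (Fo ((SCo^^m) Y)) ((SDo^^m) (Fo Y))" for Y
  proof (induction m)
    case 0 then show ?case using iso_refl[OF C2] by simp
  next
    case (Suc k)
    show ?case using iso_trans[OF C2 isoF[of "(SCo^^k) Y"] iso_functor[OF SD Suc.IH]] by simp
  qed
  have hd: "hdim sc1 Hom1 X Y = hdim sc2 Hom2 (Fo X) (Fo Y)" for X Y
    by (rule ff_hdim[OF C1 C2 F ff])
  have adj: "adj_matrix sc2 Hom2 (SDo^^m) (Fo X) (Fo Y) = adj_matrix sc1 Hom1 (SCo^^m) X Y" for X Y
    unfolding adj_matrix_def hd using iso_hdim[OF C2 isoP[of Y], of "Fo X"] by simp
  have bs: "inj_on Fo \<phi> \<and> brick_set sc2 Hom2 id2 n (Fo ` \<phi>)" if B: "brick_set sc1 Hom1 id1 n \<phi>" for \<phi>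
  proof -
    have hB: "\<And>X Y. X \<in> \<phi> \<Longrightarrow> Y \<in> \<phi> \<Longrightarrow> hdim sc1 Hom1 X Y = (if X = Y then 1 else 0)"
      using B unfolding brick_set_def by blast
    have inj: "inj_on Fo \<phi>"
    proof (rule inj_onI, rule ccontr)
      fix X Y assume XY: "X \<in> \<phi>" "Y \<in> \<phi>" "Fo X = Fo Y" "X \<noteq> Y"
      have "(0::enat) = hdim sc1 Hom1 X Y" using hB[OF XY(1,2)] XY(4) by simp
      also have "\<dots> = hdim sc1 Hom1 X X" using hd[of X Y] hd[of X X] XY(3) by simp
      also have "\<dots> = 1" using hB[OF XY(1,1)] by simp
      finally show False by simp
    qed
    have "brick_set sc2 Hom2 id2 n (Fo ` \<phi>)"
      unfolding brick_set_def
    proof (intro conjI ballI)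
      show "finite (Fo ` \<phi>)" using B unfolding brick_set_def by simp
      show "card (Fo ` \<phi>) = n" using B inj card_image unfolding brick_set_def by metis
      fix a assume "a \<in> Fo ` \<phi>"
      then obtain X where X: "X \<in> \<phi>" "a = Fo X" by auto
      show "nonzero_brick sc2 Hom2 id2 a"
        using ff_brick[OF C1 C2 F ff] B X unfolding brick_set_def by blast
      fix b assume "b \<in> Fo ` \<phi>"
      then obtain Y where Y: "Y \<in> \<phi>" "b = Fo Y" by auto
      have "(a = b) = (X = Y)" using inj X Y by (auto dest: inj_onD)
      thus "hdim sc2 Hom2 a b = (if a = b then 1 else 0)"
        using hB[OF X(1) Y(1)] hd[of X Y] X Y by simp
    qed
    with inj show ?thesis by blast
  qed
  show "fpdim sc1 Hom1 id1 n (SCo ^^ m) \<le> fpdim sc2 Hom2 id2 n (SDo ^^ m)"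
  proof (cases "{\<phi>. brick_set sc1 Hom1 id1 n \<phi>} = {}")
    case True
    show ?thesis
    proof (cases "{\<phi>. brick_set sc2 Hom2 id2 n \<phi>} = {}")
      case True2: True
      show ?thesis unfolding fpdim_def using True True2 by simp
    next
      case False
      then obtain \<psi> where \<psi>: "brick_set sc2 Hom2 id2 n \<psi>" by blast
      have "finite \<psi>" "\<psi> \<noteq> {}" using \<psi> n unfolding brick_set_def by auto
      hence "0 \<le> spec_rad_inf \<psi> (adj_matrix sc2 Hom2 (SDo ^^ m))" by (rule spec_rad_inf_nonneg)
      hence "0 \<le> (SUP \<phi> \<in> {\<phi>. brick_set sc2 Hom2 id2 n \<phi>}. spec_rad_inf \<phi> (adj_matrix sc2 Hom2 (SDo ^^ m)))"
        by (rule SUP_upper2[rotated]) (use \<psi> in simp)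
      thus ?thesis unfolding fpdim_def using True False by simp
    qed
  next
    case False
    then obtain \<phi>0 where "brick_set sc1 Hom1 id1 n \<phi>0" by blast
    hence ne2: "{\<phi>. brick_set sc2 Hom2 id2 n \<phi>} \<noteq> {}" using bs by blast
    have "(SUP \<phi> \<in> {\<phi>. brick_set sc1 Hom1 id1 n \<phi>}. spec_rad_inf \<phi> (adj_matrix sc1 Hom1 (SCo ^^ m)))
       \<le> (SUP \<phi> \<in> {\<phi>. brick_set sc2 Hom2 id2 n \<phi>}. spec_rad_inf \<phi> (adj_matrix sc2 Hom2 (SDo ^^ m)))"
    proof (rule SUP_least)
      fix \<phi> assume "\<phi> \<in> {\<phi>. brick_set sc1 Hom1 id1 n \<phi>}"
      hence b: "inj_on Fo \<phi>" "brick_set sc2 Hom2 id2 n (Fo ` \<phi>)" using bs by auto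
      have "spec_rad_inf \<phi> (adj_matrix sc1 Hom1 (SCo ^^ m)) \<le> spec_rad_inf (Fo ` \<phi>) (adj_matrix sc2 Hom2 (SDo ^^ m))"
        by (rule spec_rad_inf_reindex[OF b(1)]) (rule adj)
      also have "\<dots> \<le> (SUP \<phi> \<in> {\<phi>. brick_set sc2 Hom2 id2 n \<phi>}. spec_rad_inf \<phi> (adj_matrix sc2 Hom2 (SDo ^^ m)))"
        by (rule SUP_upper) (use b in simp)
      finally show "spec_rad_inf \<phi> (adj_matrix sc1 Hom1 (SCo ^^ m)) \<le> (SUP \<phi> \<in> {\<phi>. brick_set sc2 Hom2 id2 n \<phi>}. spec_rad_inf \<phi> (adj_matrix sc2 Hom2 (SDo ^^ m)))" .
    qed
    thus ?thesis unfolding fpdim_def by (simp only: False ne2 if_False)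
  qed
qed

end
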